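(* Let $A$ be the semi-local highest-score matrix of strings $x$ (length $m$) and $y$ (length $n$), and let $w, r$ be positive integers. To represent the $(w,r)$-restricted highest-score matrix $A^{w,r}$ implicitly, it suffices to store only those critical points $(\hat{\imath}, \hat{\jmath})$ of the unrestricted matrix $A$ for which $\hat{\jmath} - \hat{\imath} < w$; that is, every defined entry $A^{w,r}(i,j)$ is determined by this set of critical points.
   Context: Notation: $[i:j] = \{i, i+1, \ldots, j\}$ and $\langle i:j\rangle = \{i+\tfrac12, i+\tfrac32, \ldots, j-\tfrac12\}$ (odd half-integers); odd half-integer variables are written with a hat. The alignment dag of $x$ and $y$ has vertices $v_{k,l}$, $k\in[0:m]$, $l\in[0:n]$, horizontal edges $v_{k,l-1}\to v_{k,l}$ and vertical edges $v_{k-1,l}\to v_{k,l}$ of score $0$, and diagonal edges $v_{k-1,l-1}\to v_{k,l}$ of score $1$ present exactly when $x_k = y_l$. The (semi-local) highest-score matrix $A$ has as entry $A(i,j)$ the maximum score of a path in this dag from the top boundary at column $i$ to the bottom boundary at column $j$ (i.e. the LLCS of $x$ and the substring of $y$ between columns $i$ and $j$), in the standard semi-local framework of Tiskin. A critical point of $A$ is a pair of odd half-integers $(\hat{\imath}, \hat{\jmath})$ such that $A(\hat{\imath}+\tfrac12,\hat{\jmath}-\tfrac12) + 1 = A(\hat{\imath}-\tfrac12,\hat{\jmath}-\tfrac12) = A(\hat{\imath}+\tfrac12,\hat{\jmath}+\tfrac12) = A(\hat{\imath}-\tfrac12,\hat{\jmath}+\tfrac12)$. Known fact (Tiskin): the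 0/1 matrix $D_A$ marking the critical points is a permutation matrix, and $A(i,j) = j - i - D_A^\Sigma(i,j)$, where $D_A^\Sigma(i,j)$ is the number of critical points $(\hat{\imath},\hat{\jmath})$ with $\hat{\imath} > i$ and $\hat{\jmath} < j$. The $(w,r)$-restricted highest-score matrix $A^{w,r}$ is defined by $A^{w,r}(i,j) = A(i,j)$ if $j - i \le w$ and $i \bmod r = j \bmod r = 0$, and $A^{w,r}(i,j)$ undefined otherwise. *)

theory Defs
  imports Main "HOL.Real"
begin

text \<open>The alignment dag is extended (as in Tiskin) by m wildcard columns on each side
  of y: columns range over [-m : n+m]; in a column l with l \<le> 0 or l > n the
  character of the padded y is a wildcard matching every character of x.\<close>

definition matches :: "'a list \<Rightarrow> 'a list \<Rightarrow> nat \<Rightarrow> int \<Rightarrow> bool" where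
  "matches x y k l \<longleftrightarrow> (l \<le> 0 \<or> l > int (length y) \<or> x ! (k - 1) = y ! (nat l - 1))"

inductive dpath :: "'a list \<Rightarrow> 'a list \<Rightarrow> nat \<times> int \<Rightarrow> nat \<times> int \<Rightarrow> nat \<Rightarrow> bool"
  for x y where
  start: "dpath x y v v 0"
| hor: "dpath x y v (k, l) s \<Longrightarrow> dpath x y v (k, l + 1) s"
| ver: "dpath x y v (k, l) s \<Longrightarrow> dpath x y v (Suc k, l) s"
| dia: "dpath x y v (k, l) s \<Longrightarrow> matches x y (Suc k) (l + 1) \<Longrightarrow>
        dpath x y v (Suc k, l + 1) (Suc s)"

text \<open>Semi-local highest-score matrix A(i,j), i \<in> [-m:n], j \<in> [0:m+n];
  A(i,j) = j - i for i > j (Tiskin's convention).\<close>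
definition hsm :: "'a list \<Rightarrow> 'a list \<Rightarrow> int \<Rightarrow> int \<Rightarrow> int" where
  "hsm x y i j = (if j < i then j - i
     else int (Max {s. dpath x y (0, i) (length x, j) s}))"

text \<open>Critical points of A, as pairs of odd half-integers (\<imath>, \<jmath>) with
  \<imath> \<in> \<langle>-m:n\<rangle>, \<jmath> \<in> \<langle>0:m+n\<rangle>.\<close>
definition crit :: "'a list \<Rightarrow> 'a list \<Rightarrow> (real \<times> real) set" where
  "crit x y = {(a + 1/2, b + 1/2) | a b :: int.
      - int (length x) \<le> a \<and> a < int (length y) \<and>
      0 \<le> b \<and> b < int (length x) + int (length y) \<and>
      hsm x y (a + 1) b + 1 = hsm x y a b \<and>
      hsm x y a b = hsm x y (a + 1) (b + 1) \<and>
      hsm x y (a + 1) (b + 1) = hsm x y a (b + 1)}"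

definition hsm_restr :: "'a list \<Rightarrow> 'a list \<Rightarrow> int \<Rightarrow> int \<Rightarrow> int \<Rightarrow> int \<Rightarrow> int option" where
  "hsm_restr x y w r i j =
     (if - int (length x) \<le> i \<and> i \<le> int (length y) \<and>
         0 \<le> j \<and> j \<le> int (length x) + int (length y) \<and>
         j - i \<le> w \<and> i mod r = 0 \<and> j mod r = 0
      then Some (hsm x y i j) else None)"

end

theory Submission
  imports Defs
begin

function sc :: "'a list \<Rightarrow> 'a list \<Rightarrow> int \<Rightarrow> nat \<Rightarrow> int \<Rightarrow> int" where
  "sc x y i k l = (if k = 0 \<or> l \<le> i then 0 else
     max (sc x y i (k-1) l) (max (sc x y i k (l-1))
         (sc x y i (k-1) (l-1) + (if matches x y k l then 1 else 0))))"
  by pat_completeness auto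
termination by (relation "measure (\<lambda>(x,y,i,k,l). k + nat (l - i))") auto

declare sc.simps[simp del]

lemma sc_0: "k = 0 \<or> l \<le> i \<Longrightarrow> sc x y i k l = 0"
  by (simp add: sc.simps[of x y i k l])

lemma sc_rec: "i < l \<Longrightarrow> sc x y i (Suc k) l =
     max (sc x y i k l) (max (sc x y i (Suc k) (l-1))
         (sc x y i k (l-1) + (if matches x y (Suc k) l then 1 else 0)))"
  by (simp add: sc.simps[of x y i "Suc k" l])

lemma sc_nonneg: "0 \<le> sc x y i k l"
proof (induction x y i k l rule: sc.induct)
  case (1 x y i k l)
  then show ?case by (simp add: sc.simps[of x y i k l] le_max_iff_disj)
qed

lemma sc_mono_l1: "sc x y i k l \<le> sc x y i k (l+1)"
proof (cases "k = 0 \<or> l + 1 \<le> i")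
  case True then show ?thesis by (auto simp: sc_0)
next
  case False
  then obtain k' where k: "k = Suc k'" by (cases k) auto
  show ?thesis using False unfolding k by (simp add: sc_rec)
qed

lemma sc_mono_k1: "sc x y i k l \<le> sc x y i (Suc k) l"
proof (cases "l \<le> i")
  case True then show ?thesis by (auto simp: sc_0)
next
  case False
  show ?thesis using False by (simp add: sc_rec)
qed

lemma sc_inc_k_aux: "\<forall>l. nat (l - i) = n \<longrightarrow> sc x y i (Suc k) l \<le> sc x y i k l + 1"
proof (induction n)
  case 0
  then show ?case by (auto simp: sc_0)
next
  case (Suc n)
  show ?case
  proof (intro allI impI)
    fix l assume h: "nat (l - i) = Suc n"
    then have il: "i < l" by auto
    have n: "nat (l - 1 - i) = n" using h by simp
    have a: "sc x y i (Suc k) (l-1) \<le> sc x y i k (l-1) + 1"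
      using Suc.IH n by blast
    have b: "sc x y i k (l-1) \<le> sc x y i k l" using sc_mono_l1[of x y i k "l-1"] by simp
    show "sc x y i (Suc k) l \<le> sc x y i k l + 1"
      using a b il by (simp add: sc_rec)
  qed
qed

lemma sc_inc_k: "sc x y i (Suc k) l \<le> sc x y i k l + 1"
  using sc_inc_k_aux by blast

lemma sc_inc_l: "i < l \<Longrightarrow> sc x y i k l \<le> sc x y i k (l-1) + 1"
proof (induction k)
  case 0 then show ?case by (simp add: sc_0 sc_nonneg)
next
  case (Suc k)
  have b: "sc x y i k (l-1) \<le> sc x y i (Suc k) (l-1)" by (rule sc_mono_k1)
  show ?case using Suc b by (simp add: sc_rec)
qed

lemma dpath_le: "dpath x y v u s \<Longrightarrow> v = (0,i) \<Longrightarrow> i \<le> snd u \<and> int s \<le> sc x y i (fst u) (snd u)"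
proof (induction rule: dpath.induct)
  case start
  then show ?case by (simp add: sc_0)
next
  case (hor v k l s)
  then show ?case using sc_mono_l1[of x y i k l] by simp
next
  case (ver v k l s)
  then show ?case using sc_mono_k1[of x y i k l] by simp
next
  case (dia v k l s)
  then show ?case by (simp add: sc_rec le_max_iff_disj)
qed

lemma dpath_hor: "dpath x y v (k,l) s \<Longrightarrow> dpath x y v (k, l + int n) s"
proof (induction n)
  case 0 then show ?case by simp
next
  case (Suc n)
  then have "dpath x y v (k, (l + int n) + 1) s" by (intro dpath.hor) simp
  then show ?case by (simp add: algebra_simps)
qed

lemma dpath_ver: "dpath x y v (k,l) s \<Longrightarrow> dpath x y v (k + n, l) s"
proof (induction n)
  case 0 then show ?case by simp
next
  case (Suc n)
  then show ?case using dpath.ver by fastforce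
qed

lemma dpath_ex: "i \<le> l \<Longrightarrow> dpath x y (0,i) (k,l) (nat (sc x y i k l))"
proof (induction x y i k l rule: sc.induct)
  case (1 x y i k l)
  show ?case
  proof (cases "k = 0")
    case True
    have "dpath x y (0,i) (0, i + int (nat (l - i))) 0"
      by (rule dpath_hor) (rule dpath.start)
    then show ?thesis using True 1(4) by (simp add: sc_0)
  next
    case k0: False
    show ?thesis
    proof (cases "l \<le> i")
      case True
      then have li: "l = i" using 1(4) by simp
      have "dpath x y (0,i) (0 + k, i) 0"
        by (rule dpath_ver) (rule dpath.start)
      then show ?thesis using li by (simp add: sc_0)
    next
      case False
      then obtain k' where k: "k = Suc k'" using k0 by (cases k) auto
      have IH1: "dpath x y (0,i) (k',l) (nat (sc x y i k' l))"
        using 1(1) k0 False 1(4) k by simp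
      have IH2: "dpath x y (0,i) (k,l-1) (nat (sc x y i k (l-1)))"
        using 1(2) k0 False by simp
      have IH3: "dpath x y (0,i) (k',l-1) (nat (sc x y i k' (l-1)))"
        using 1(3) k0 False k by simp
      have mono: "sc x y i k' (l-1) \<le> sc x y i k' l" using sc_mono_l1[of x y i k' "l-1"] by simp
      have rec: "sc x y i k l = max (sc x y i k' l) (max (sc x y i k (l-1))
         (sc x y i k' (l-1) + (if matches x y k l then 1 else 0)))"
        using False k by (simp add: sc_rec)
      have cases: "sc x y i k l = sc x y i k' l \<or> sc x y i k l = sc x y i k (l-1) \<or>
           (matches x y k l \<and> sc x y i k l = sc x y i k' (l-1) + 1)"
        using rec mono by (auto simp: max_def split: if_splits)
      moreover have p1: "dpath x y (0,i) (k,l) (nat (sc x y i k' l))"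
        using dpath.ver[OF IH1] k by simp
      moreover have p2: "dpath x y (0,i) (k,l) (nat (sc x y i k (l-1)))"
        using dpath.hor[OF IH2] by simp
      moreover have p3: "matches x y k l \<Longrightarrow> dpath x y (0,i) (k,l) (Suc (nat (sc x y i k' (l-1))))"
        using dpath.dia[OF IH3] k by simp
      ultimately show ?thesis
      proof (elim disjE conjE)
        assume "sc x y i k l = sc x y i k' l" then show ?thesis using p1 by simp
      next
        assume "sc x y i k l = sc x y i k (l-1)" then show ?thesis using p2 by simp
      next
        assume m: "matches x y k l" and e: "sc x y i k l = sc x y i k' (l-1) + 1"
        have "nat (sc x y i k l) = Suc (nat (sc x y i k' (l-1)))"
          using e sc_nonneg[of x y i k' "l-1"] by (simp add: nat_add_distrib)
        then show ?thesis using p3 m by simp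
      qed
    qed
  qed
qed

lemma hsm_eq: "i \<le> j \<Longrightarrow> hsm x y i j = sc x y i (length x) j"
proof -
  assume ij: "i \<le> j"
  let ?S = "{s. dpath x y (0, i) (length x, j) s}"
  have le: "\<And>s. s \<in> ?S \<Longrightarrow> s \<le> nat (sc x y i (length x) j)"
    using dpath_le by fastforce
  have mem: "nat (sc x y i (length x) j) \<in> ?S" using dpath_ex[OF ij] by simp
  have fin: "finite ?S" using le by (meson finite_atMost rev_finite_subset subsetI atMost_iff)
  have "Max ?S = nat (sc x y i (length x) j)"
    by (rule Max_eqI[OF fin le mem])
  then show ?thesis using ij sc_nonneg[of x y i "length x" j] by (simp add: hsm_def)
qed

lemma sc_transfer:
  "(\<And>k' l'. 1 \<le> k' \<Longrightarrow> k' \<le> k \<Longrightarrow> i < l' \<Longrightarrow> l' \<le> l \<Longrightarrow> matches x y k' l' = matches x' y' k' l')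
   \<Longrightarrow> sc x y i k l = sc x' y' i k l"
proof (induction x y i k l rule: sc.induct)
  case (1 x y i k l)
  show ?case
  proof (cases "k = 0 \<or> l \<le> i")
    case True then show ?thesis by (simp add: sc_0)
  next
    case False
    then obtain k' where k: "k = Suc k'" by (cases k) auto
    have e1: "sc x y i k' l = sc x' y' i k' l"
      using 1(1) False 1(4) k by simp
    have e2: "sc x y i k (l-1) = sc x' y' i k (l-1)"
      using 1(2) False 1(4) by simp
    have e3: "sc x y i k' (l-1) = sc x' y' i k' (l-1)"
      using 1(3) False 1(4) k by simp
    have e4: "matches x y k l = matches x' y' k l" using 1(4) False k by simp
    show ?thesis using False e1 e2 e3 e4 k by (simp add: sc_rec)
  qed
qed

lemma hsm_transfer:
  assumes "length x = length x'" "i \<le> j"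
    "\<And>k l. 1 \<le> k \<Longrightarrow> k \<le> length x \<Longrightarrow> i < l \<Longrightarrow> l \<le> j \<Longrightarrow> matches x y k l = matches x' y' k l"
  shows "hsm x y i j = hsm x' y' i j"
  using assms hsm_eq[of i j x y] hsm_eq[of i j x' y'] sc_transfer[of "length x" i j x y x' y'] by simp

lemma local_step:
  fixes F00 F01 F10 G00 G01 G10 u :: int
  assumes "F00 \<le> F01" "F01 \<le> F00+1" "F00 \<le> F10" "F10 \<le> F00+1"
    "G00 \<le> G01" "G01 \<le> G00+1" "G00 \<le> G10" "G10 \<le> G00+1" "0 \<le> u" "u \<le> 1"
    "0 \<le> F00-G00" "F00-G00 \<le> 1" "0 \<le> F01-G01" "F01-G01 \<le> 1" "0 \<le> F10-G10" "F10-G10 \<le> 1"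
    "F01-G01 \<le> F00-G00" "F00-G00 \<le> F10-G10"
  shows "0 \<le> max F01 (max F10 (F00+u)) - max G01 (max G10 (G00+u)) \<and>
         max F01 (max F10 (F00+u)) - max G01 (max G10 (G00+u)) \<le> 1 \<and>
         F01 - G01 \<le> max F01 (max F10 (F00+u)) - max G01 (max G10 (G00+u)) \<and>
         max F01 (max F10 (F00+u)) - max G01 (max G10 (G00+u)) \<le> F10 - G10"
  using assms unfolding max_def by (smt (verit))

lemma zz: "(t::int) \<in> {0,1} \<Longrightarrow> 0 \<le> t \<and> t \<le> 1" by auto

definition Ed :: "'a list \<Rightarrow> 'a list \<Rightarrow> int \<Rightarrow> nat \<Rightarrow> int \<Rightarrow> int" where
  "Ed x y a k l = sc x y a k l - sc x y (a+1) k l"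

lemma E_prop_aux:
  "\<forall>l. nat (l - (a+1)) = n \<longrightarrow> a + 1 \<le> l \<longrightarrow>
     Ed x y a k l \<in> {0,1} \<and> (0 < k \<longrightarrow> Ed x y a (k-1) l \<le> Ed x y a k l) \<and>
     (a+2 \<le> l \<longrightarrow> Ed x y a k l \<le> Ed x y a k (l-1))"
proof (induction k arbitrary: n)
  case 0
  then show ?case by (simp add: Ed_def sc_0)
next
  case (Suc k)
  note outer = Suc.IH
  show ?case
  proof (induction n)
    case 0
    show ?case
    proof (intro allI impI)
      fix l assume h: "nat (l - (a+1)) = 0" "a + 1 \<le> l"
      then have l: "l = a + 1" by simp
      have "sc x y a (Suc k) l \<le> sc x y a (Suc k) (l-1) + 1" using sc_inc_l[of a l] l by simp
      moreover have "sc x y a (Suc k) (l-1) = 0" using l by (simp add: sc_0)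
      moreover have "sc x y a k l \<le> sc x y a (Suc k) l" by (rule sc_mono_k1)
      moreover have "0 \<le> sc x y a k l" by (rule sc_nonneg)
      ultimately show "Ed x y a (Suc k) l \<in> {0,1} \<and> (0 < Suc k \<longrightarrow> Ed x y a (Suc k - 1) l \<le> Ed x y a (Suc k) l) \<and>
         (a+2 \<le> l \<longrightarrow> Ed x y a (Suc k) l \<le> Ed x y a (Suc k) (l-1))"
        using l by (auto simp: Ed_def sc_0)
    qed
  next
    case (Suc n)
    show ?case
    proof (intro allI impI)
      fix l assume h: "nat (l - (a+1)) = Suc n" "a + 1 \<le> l"
      then have l: "a + 2 \<le> l" by simp
      have n1: "nat (l - 1 - (a+1)) = n" using h by simp
      have I1: "Ed x y a k (l-1) \<in> {0,1}" "Ed x y a k l \<in> {0,1}" "Ed x y a k l \<le> Ed x y a k (l-1)"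
        using outer[of "nat (l - 1 - (a+1))", rule_format, of "l-1"] outer[of "nat (l - (a+1))", rule_format, of l] l by auto
      have I2: "Ed x y a (Suc k) (l-1) \<in> {0,1}" "Ed x y a k (l-1) \<le> Ed x y a (Suc k) (l-1)"
        using Suc.IH[rule_format, of "l-1"] n1 l by auto
      let ?F00 = "sc x y a k (l-1)" and ?F01 = "sc x y a k l" and ?F10 = "sc x y a (Suc k) (l-1)"
      let ?G00 = "sc x y (a+1) k (l-1)" and ?G01 = "sc x y (a+1) k l" and ?G10 = "sc x y (a+1) (Suc k) (l-1)"
      have f1: "?F00 \<le> ?F01" "?F01 \<le> ?F00 + 1" using sc_mono_l1[of x y a k "l-1"] sc_inc_l[of a l x y k] l by auto
      have f2: "?F00 \<le> ?F10" "?F10 \<le> ?F00 + 1" using sc_mono_k1[of x y a k "l-1"] sc_inc_k[of x y a k "l-1"] by auto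
      have g1: "?G00 \<le> ?G01" "?G01 \<le> ?G00 + 1" using sc_mono_l1[of x y "a+1" k "l-1"] sc_inc_l[of "a+1" l x y k] l by auto
      have g2: "?G00 \<le> ?G10" "?G10 \<le> ?G00 + 1" using sc_mono_k1[of x y "a+1" k "l-1"] sc_inc_k[of x y "a+1" k "l-1"] by auto
      define u :: int where "u = (if matches x y (Suc k) l then 1 else 0)"
      have u: "0 \<le> u" "u \<le> 1" by (simp_all add: u_def)
      have rf: "sc x y a (Suc k) l = max ?F01 (max ?F10 (?F00 + u))"
        using l sc_rec[of a l x y k] unfolding u_def by simp
      have rg: "sc x y (a+1) (Suc k) l = max ?G01 (max ?G10 (?G00 + u))"
        using l sc_rec[of "a+1" l x y k] unfolding u_def by simp
      have d: "0 \<le> ?F00-?G00" "?F00-?G00 \<le> 1" "0 \<le> ?F01-?G01" "?F01-?G01 \<le> 1"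
        "0 \<le> ?F10-?G10" "?F10-?G10 \<le> 1" "?F01-?G01 \<le> ?F00-?G00" "?F00-?G00 \<le> ?F10-?G10"
        using zz[OF I1(1)] zz[OF I1(2)] zz[OF I2(1)] I1(3) I2(2) unfolding Ed_def by simp_all
      note LS = local_step[OF f1 f2 g1 g2 u d]
      show "Ed x y a (Suc k) l \<in> {0,1} \<and> (0 < Suc k \<longrightarrow> Ed x y a (Suc k - 1) l \<le> Ed x y a (Suc k) l) \<and>
         (a+2 \<le> l \<longrightarrow> Ed x y a (Suc k) l \<le> Ed x y a (Suc k) (l-1))"
      proof -
        have z: "\<And>t::int. 0 \<le> t \<Longrightarrow> t \<le> 1 \<Longrightarrow> t \<in> {0,1}" by auto
        note L1 = LS[THEN conjunct1] and L2 = LS[THEN conjunct2, THEN conjunct1]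
          and L3 = LS[THEN conjunct2, THEN conjunct2, THEN conjunct1]
          and L4 = LS[THEN conjunct2, THEN conjunct2, THEN conjunct2]
        show ?thesis unfolding Ed_def diff_Suc_1 rf rg
          by (intro conjI impI z[OF L1 L2] L3 L4)
      qed
    qed
  qed
qed

lemma E_prop: "a + 1 \<le> l \<Longrightarrow> Ed x y a k l \<in> {0,1} \<and> (a+2 \<le> l \<longrightarrow> Ed x y a k l \<le> Ed x y a k (l-1))"
  using E_prop_aux by blast

definition ccond :: "'a list \<Rightarrow> 'a list \<Rightarrow> int \<Rightarrow> int \<Rightarrow> bool" where
  "ccond x y a b \<longleftrightarrow> hsm x y (a + 1) b + 1 = hsm x y a b \<and>
      hsm x y a b = hsm x y (a + 1) (b + 1) \<and>
      hsm x y (a + 1) (b + 1) = hsm x y a (b + 1)"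

lemma key:
  assumes ab: "a \<le> b"
  shows "hsm x y a (b+1) = hsm x y a b + hsm x y (a+1) (b+1) - hsm x y (a+1) b - (if ccond x y a b then 1 else 0)"
proof -
  let ?m = "length x"
  have h1: "hsm x y a (b+1) = sc x y a ?m (b+1)" using ab by (simp add: hsm_eq)
  have h2: "hsm x y a b = sc x y a ?m b" using ab by (simp add: hsm_eq)
  have h3: "hsm x y (a+1) (b+1) = sc x y (a+1) ?m (b+1)" using ab by (simp add: hsm_eq)
  show ?thesis
  proof (cases "b = a")
    case True
    have h4: "hsm x y (a+1) b = -1" using True by (simp add: hsm_def)
    have s1: "sc x y a ?m a = 0" "sc x y (a+1) ?m (a+1) = 0" by (simp_all add: sc_0)
    have s2: "0 \<le> sc x y a ?m (a+1)" "sc x y a ?m (a+1) \<le> 1"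
      using sc_nonneg[of x y a ?m "a+1"] sc_inc_l[of a "a+1" x y ?m] s1 by auto
    show ?thesis using h1 h2 h3 h4 s1 s2 True unfolding ccond_def by auto
  next
    case False
    then have ab1: "a + 1 \<le> b" using ab by simp
    have h4: "hsm x y (a+1) b = sc x y (a+1) ?m b" using ab1 by (simp add: hsm_eq)
    have e1: "Ed x y a ?m (b+1) \<in> {0,1}" "Ed x y a ?m (b+1) \<le> Ed x y a ?m b"
      using E_prop[of a "b+1" x y ?m] ab1 by auto
    have e2: "Ed x y a ?m b \<in> {0,1}" using E_prop[of a b x y ?m] ab1 by auto
    have m1: "sc x y a ?m b \<le> sc x y a ?m (b+1)" by (rule sc_mono_l1)
    have m2: "sc x y (a+1) ?m b \<le> sc x y (a+1) ?m (b+1)" by (rule sc_mono_l1)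
    have m3: "sc x y (a+1) ?m (b+1) \<le> sc x y (a+1) ?m b + 1" using sc_inc_l[of "a+1" "b+1" x y ?m] ab1 by simp
    have m4: "sc x y a ?m (b+1) \<le> sc x y a ?m b + 1" using sc_inc_l[of a "b+1" x y ?m] ab1 by simp
    have cc: "ccond x y a b \<longleftrightarrow> (sc x y (a+1) ?m b + 1 = sc x y a ?m b \<and>
         sc x y a ?m b = sc x y (a+1) ?m (b+1) \<and> sc x y (a+1) ?m (b+1) = sc x y a ?m (b+1))"
      unfolding ccond_def using h1 h2 h3 h4 by simp
    have e1': "0 \<le> sc x y a ?m (b+1) - sc x y (a+1) ?m (b+1)" "sc x y a ?m (b+1) - sc x y (a+1) ?m (b+1) \<le> 1"
      "sc x y a ?m (b+1) - sc x y (a+1) ?m (b+1) \<le> sc x y a ?m b - sc x y (a+1) ?m b"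
      using e1 unfolding Ed_def by auto
    have e2': "0 \<le> sc x y a ?m b - sc x y (a+1) ?m b" "sc x y a ?m b - sc x y (a+1) ?m b \<le> 1"
      using e2 unfolding Ed_def by auto
    show ?thesis unfolding h1 h2 h3 h4 cc using e1' e2' m1 m2 m3 m4 by (smt (verit))
  qed
qed

lemma crit_iff: "(real_of_int a + 1/2, real_of_int b + 1/2) \<in> crit x y \<longleftrightarrow>
   (- int (length x) \<le> a \<and> a < int (length y) \<and> 0 \<le> b \<and> b < int (length x) + int (length y) \<and> ccond x y a b)"
  unfolding crit_def ccond_def by auto

lemma main_eq:
  assumes len: "length x' = length x" "length y' = length y"
    and cE: "\<And>a b. - int (length x) \<le> a \<Longrightarrow> a < int (length y) \<Longrightarrow> 0 \<le> b \<Longrightarrow>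
        b < int (length x) + int (length y) \<Longrightarrow> b - a < w \<Longrightarrow> ccond x y a b = ccond x' y' a b"
  shows "- int (length x) \<le> i \<Longrightarrow> i \<le> int (length y) \<Longrightarrow> 0 \<le> j \<Longrightarrow>
     j \<le> int (length x) + int (length y) \<Longrightarrow> j - i \<le> w \<Longrightarrow> hsm x y i j = hsm x' y' i j"
proof (induction "nat (j - i)" arbitrary: i j rule: less_induct)
  case less
  consider "j < i" | "j = i" | "i < j" "i = int (length y)" | "i < j" "j = 0"
     | "i < j" "i < int (length y)" "0 < j" using less.prems by linarith
  then show ?case
  proof cases
    case 1 then show ?thesis by (simp add: hsm_def)
  next
    case 2 then show ?thesis using len by (intro hsm_transfer) auto
  next
    case 3 then show ?thesis using len by (intro hsm_transfer) (auto simp: matches_def)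
  next
    case 4 then show ?thesis using len by (intro hsm_transfer) (auto simp: matches_def)
  next
    case 5
    have k1: "hsm x y i j = hsm x y i (j-1) + hsm x y (i+1) j - hsm x y (i+1) (j-1) - (if ccond x y i (j-1) then 1 else 0)"
      using key[of i "j-1" x y] 5 by simp
    have k2: "hsm x' y' i j = hsm x' y' i (j-1) + hsm x' y' (i+1) j - hsm x' y' (i+1) (j-1) - (if ccond x' y' i (j-1) then 1 else 0)"
      using key[of i "j-1" x' y'] 5 by simp
    have i1: "hsm x y i (j-1) = hsm x' y' i (j-1)"
      by (rule less.hyps) (use less.prems 5 in auto)
    have i2: "hsm x y (i+1) j = hsm x' y' (i+1) j"
      by (rule less.hyps) (use less.prems 5 in auto)
    have i3: "hsm x y (i+1) (j-1) = hsm x' y' (i+1) (j-1)"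
    proof (cases "j - 1 < i + 1")
      case True then show ?thesis by (simp add: hsm_def)
    next
      case False then show ?thesis
        by (intro less.hyps) (use less.prems 5 in auto)
    qed
    have c: "ccond x y i (j-1) = ccond x' y' i (j-1)"
      by (rule cE) (use less.prems 5 in auto)
    show ?thesis using k1 k2 i1 i2 i3 c by simp
  qed
qed

theorem proposition1:
  fixes x y x' y' :: "'a list" and w r :: int
  assumes "w > 0" and "r > 0"
    and "length x' = length x" and "length y' = length y"
    and "{(ih, jh) \<in> crit x y. jh - ih < of_int w} = {(ih, jh) \<in> crit x' y'. jh - ih < of_int w}"
  shows "\<forall>i j. hsm_restr x y w r i j \<noteq> None \<longrightarrow> hsm_restr x y w r i j = hsm_restr x' y' w r i j"
proof (intro allI impI)
  fix i j
  assume h: "hsm_restr x y w r i j \<noteq> None"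
  have cE: "ccond x y a b = ccond x' y' a b"
    if "- int (length x) \<le> a" "a < int (length y)" "0 \<le> b"
       "b < int (length x) + int (length y)" "b - a < w" for a b
  proof -
    let ?p = "(real_of_int a + 1/2, real_of_int b + 1/2)"
    have d: "snd ?p - fst ?p < of_int w" using that(5) by simp
    have "?p \<in> crit x y \<longleftrightarrow> ?p \<in> {(ih, jh) \<in> crit x y. jh - ih < of_int w}" using d by auto
    also have "\<dots> \<longleftrightarrow> ?p \<in> {(ih, jh) \<in> crit x' y'. jh - ih < of_int w}" using assms(5) by simp
    also have "\<dots> \<longleftrightarrow> ?p \<in> crit x' y'" using d by auto
    finally show ?thesis using that assms(3,4) by (simp add: crit_iff)
  qed
  have r: "- int (length x) \<le> i" "i \<le> int (length y)" "0 \<le> j" "j \<le> int (length x) + int (length y)" "j - i \<le> w"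
    using h by (auto simp: hsm_restr_def split: if_splits)
  have "hsm x y i j = hsm x' y' i j"
    by (rule main_eq[OF assms(3,4) cE r]) auto
  then show "hsm_restr x y w r i j = hsm_restr x' y' w r i j"
    using assms(3,4) by (simp add: hsm_restr_def)
qed

end
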